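(* Let $d\in\mathbb N$, $\alpha\in[0,d)$, and let $p>1$ with $\alpha p<d$. Let $\mathcal U_n=\{\mathbf U_1,\dots,\mathbf U_n\}$ consist of $n$ independent uniform random points in $(0,1)^d$, each carrying an independent uniform $[0,1]$ mark. Then the ONG functional satisfies $$ \sup_{n\in\mathbb N}E\left[\xi(n^{1/d}\mathbf U_1;n^{1/d}\mathcal U_n)^p\right]<\infty. $$
   Context: Points carry marks in $[0,1]$ (scaling $n^{1/d}\mathcal U_n$ rescales positions only, keeping marks). For a finite marked set $\mathcal X\subset\mathbb R^d$ and $\mathbf x\in\mathcal X$ with mark $T(\mathbf x)$, $D(\mathbf x;\mathcal X)$ is the Euclidean distance from $\mathbf x$ to its nearest neighbour among the points $\mathbf y\in\mathcal X\setminus\{\mathbf x\}$ with mark $T(\mathbf y)<T(\mathbf x)$; the ONG functional is $\xi(\mathbf x;\mathcal X)=D(\mathbf x;\mathcal X)^\alpha$ if such a point exists and $\xi(\mathbf x;\mathcal X)=0$ otherwise. *)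

theory Defs
  imports "HOL-Analysis.Analysis"
begin

text \<open>Marked points: pairs (position, mark).\<close>
definition ong_xi :: "real \<Rightarrow> ('a::metric_space \<times> real) \<Rightarrow> ('a \<times> real) set \<Rightarrow> real" where
  "ong_xi \<alpha> x X =
     (let S = {y \<in> X - {x}. snd y < snd x}
      in if S = {} then 0 else (INF y\<in>S. dist (fst x) (fst y)) powr \<alpha>)"

definition scale_marked :: "real \<Rightarrow> ('a::real_vector \<times> real) \<Rightarrow> ('a \<times> real)" where
  "scale_marked c x = (c *\<^sub>R fst x, snd x)"

definition marked_unif :: "((real^'d) \<times> real) measure" where
  "marked_unif = uniform_measure lborel (box 0 One \<times> {0..1})"

end

theory Submission
  imports Defs "HOL-Probability.Probability"
begin


lemma lborel_Times:
  fixes A :: "'a::euclidean_space set" and C :: "'b::euclidean_space set"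
  assumes "A \<in> sets lborel" "C \<in> sets lborel"
  shows "emeasure (lborel :: ('a \<times> 'b) measure) (A \<times> C) = emeasure lborel A * emeasure lborel C"
  using assms by (simp add: lborel_prod[symmetric] sigma_finite_measure.emeasure_pair_measure_Times[OF lborel.sigma_finite_measure_axioms])

lemma B_measure: "emeasure (lborel :: ((real^'d) \<times> real) measure) (box 0 One \<times> {0..1}) = 1"
  by (simp add: lborel_Times emeasure_lborel_box_eq inner_diff_left)

lemma prob_marked: "prob_space (marked_unif :: ((real^'d) \<times> real) measure)"
  unfolding marked_unif_def
  by (rule prob_space_uniform_measure) (auto simp: B_measure)



lemma One_nth[simp]: "(One :: real^'d) $ i = 1"
  by (metis Cart_1 one_index)

lemma One_nth'[simp]: "(\<Sum>x\<in>(Basis :: (real^'d) set). x $ i) = 1"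
  using One_nth[of i] by (simp only: sum_component)

definition hit :: "real \<Rightarrow> ((real^'d) \<times> real) \<Rightarrow> ((real^'d) \<times> real) \<Rightarrow> bool" where
  "hit s x y \<longleftrightarrow> (\<forall>i. min (fst x $ i) (1-s) < fst y $ i \<and> fst y $ i < min (fst x $ i) (1-s) + s) \<and> snd y < snd x"

lemma hit_set:
  "{y. hit s x y} = box (\<chi> i. min (fst x $ i) (1-s)) ((\<chi> i. min (fst x $ i) (1-s)) + s *\<^sub>R One) \<times> {..<snd x}"
  by (auto simp: hit_def mem_box_cart)

lemma Times_sets:
  fixes A :: "'a::euclidean_space set" and C :: "'b::euclidean_space set"
  assumes "A \<in> sets borel" "C \<in> sets borel"
  shows "A \<times> C \<in> sets (borel :: ('a \<times> 'b) measure)"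
proof -
  have "A \<times> C \<in> sets (lborel \<Otimes>\<^sub>M lborel)" using assms by (intro pair_measureI) auto
  then show ?thesis by (metis lborel_prod sets_lborel)
qed

lemma hit_meas: "{y. hit s x y} \<in> sets borel"
  unfolding hit_set by (intro Times_sets) auto

lemma B_sets: "box 0 One \<times> {0..1} \<in> sets (borel :: ((real^'d) \<times> real) measure)"
  by (intro Times_sets) auto

lemma hit_emeasure:
  assumes x: "x \<in> box 0 One \<times> {0..1}" and s: "0 < s" "s \<le> 1"
  shows "emeasure (marked_unif :: ((real^'d) \<times> real) measure) {y. hit s x y} = ennreal (s ^ CARD('d) * snd x)"
proof -
  define a :: "real^'d" where "a = (\<chi> i. min (fst x $ i) (1-s))"
  have sub: "box a (a + s *\<^sub>R One) \<subseteq> box 0 One"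
  proof
    fix z assume z: "z \<in> box a (a + s *\<^sub>R One)"
    show "z \<in> box 0 One" unfolding mem_box_cart
    proof
      fix i
      have "0 < fst x $ i" "fst x $ i < 1" using x by (auto simp: mem_box_cart)
      moreover have "a $ i < z $ i" "z $ i < a $ i + s" using z by (auto simp: mem_box_cart)
      ultimately show "(0::real^'d) $ i < z $ i \<and> z $ i < One $ i"
        using s unfolding a_def by (simp only: vec_lambda_beta One_nth zero_index) linarith
    qed
  qed
  have "(box 0 One \<times> {0..1}) \<inter> {y. hit s x y} = box a (a + s *\<^sub>R One) \<times> {0..<snd x}"
    unfolding hit_set a_def[symmetric] using sub x by auto
  moreover have "emeasure lborel (box a (a + s *\<^sub>R One)) = ennreal (s ^ CARD('d))"
    using s by (simp add: emeasure_lborel_box_eq inner_diff_left inner_add_left prod_constant)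
  ultimately have "emeasure lborel ((box 0 One \<times> {0..1}) \<inter> {y. hit s x y}) = ennreal (s ^ CARD('d) * snd x)"
    using x s by (auto simp add: lborel_Times ennreal_mult emeasure_lborel_Ico)
  then show ?thesis
    unfolding marked_unif_def using hit_meas[of s x] B_sets
    by (subst emeasure_uniform_measure) (auto simp: B_measure divide_ennreal_def)
qed



lemma mark_int1:
  assumes a: "0 < a" "a \<le> 1"
  shows "(\<integral>\<^sup>+t. ennreal ((1 - a * t) ^ m) * indicator {0..1} t \<partial>lborel) \<le> ennreal (1 / (a * (m + 1)))"
proof -
  define F where "F t = (-1 / (a * (m + 1))) * (1 - a * t) ^ Suc m" for t :: real
  have "(\<integral>\<^sup>+t. ennreal ((1 - a * t) ^ m) * indicator {0..1} t \<partial>lborel) = ennreal (F 1 - F 0)"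
  proof (rule nn_integral_FTC_Icc)
    fix t :: real assume t: "t \<in> {0..1}"
    show "(F has_real_derivative (1 - a * t) ^ m) (at t)"
    proof -
      have d0: "((\<lambda>t. 1 - a*t) has_real_derivative (0 - a*1)) (at t)"
        by (intro derivative_intros DERIV_cmult DERIV_ident)
      have d: "((\<lambda>t. (1 - a*t) ^ Suc m) has_real_derivative (real (Suc m) * (1-a*t)^m * (0 - a*1))) (at t)"
        using DERIV_power_Suc[OF d0, of m] by (simp add: algebra_simps)
      have "((\<lambda>t. (-1 / (a * (m + 1))) * (1 - a*t) ^ Suc m) has_real_derivative
              (-1 / (a * (m + 1))) * (real (Suc m) * (1-a*t)^m * (0 - a*1))) (at t)"
        by (rule DERIV_cmult[OF d])
      moreover have "(-1 / (a * (m + 1))) * (real (Suc m) * (1-a*t)^m * (0 - a*1)) = (1 - a * t) ^ m"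
      proof -
        have g: "(-1 / (a * (m + 1))) * (real (Suc m) * P * (0 - a*1)) = P" for P
          using a by (simp add: divide_simps)
        show ?thesis by (rule g)
      qed
      ultimately show ?thesis unfolding F_def by simp
    qed
    show "0 \<le> (1 - a * t) ^ m" using t a by (simp add: mult_le_one)
  qed auto
  moreover have "F 1 - F 0 = (1 - (1 - a) ^ Suc m) / (a * (m + 1))"
  proof -
    have g: "(-1 / D) * X - (-1 / D) * 1 = (1 - X) / D" for X D :: real
      by (simp add: diff_divide_distrib)
    show ?thesis unfolding F_def using g by simp
  qed
  moreover have "(1 - (1 - a) ^ Suc m) / (a * (m + 1)) \<le> 1 / (a * (m + 1))"
    using a by (intro divide_right_mono) auto
  ultimately show ?thesis by (simp add: ennreal_leI)
qed

lemma mark_int: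
  assumes a: "0 < a" "a \<le> 1"
  shows "(\<integral>\<^sup>+x. ennreal ((1 - a * snd x) ^ m) * indicator (box 0 One \<times> {0..1}) x
           \<partial>(lborel :: ((real^'d) \<times> real) measure)) \<le> ennreal (1 / (a * (m + 1)))"
proof -
  let ?f = "\<lambda>x::(real^'d) \<times> real. ennreal ((1 - a * snd x) ^ m) * indicator (box 0 One \<times> {0..1}) x"
  let ?I = "\<integral>\<^sup>+t. ennreal ((1 - a * t) ^ m) * indicator {0..1} t \<partial>lborel"
  have inner: "(\<integral>\<^sup>+t. ?f (u, t) \<partial>lborel) = indicator (box 0 One) u * ?I" for u
  proof -
    have "(\<integral>\<^sup>+t. ?f (u, t) \<partial>lborel) = (\<integral>\<^sup>+t. indicator (box 0 One) u * (ennreal ((1 - a * t) ^ m) * indicator {0..1} t) \<partial>lborel)"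
      by (rule nn_integral_cong) (simp add: indicator_times mult_ac)
    also have "\<dots> = indicator (box 0 One) u * ?I"
      by (rule nn_integral_cmult) measurable
    finally show ?thesis .
  qed
  have "integral\<^sup>N lborel ?f = integral\<^sup>N (lborel \<Otimes>\<^sub>M lborel) ?f"
    by (simp add: lborel_prod)
  also have "\<dots> = (\<integral>\<^sup>+u. \<integral>\<^sup>+t. ?f (u, t) \<partial>lborel \<partial>lborel)"
    by (rule lborel.nn_integral_fst[symmetric]) measurable
  also have "\<dots> = (\<integral>\<^sup>+u. indicator (box 0 (One::real^'d)) u * ?I \<partial>lborel)"
    using inner by simp
  also have "\<dots> = ?I * emeasure lborel (box 0 (One :: real^'d))"
    by (subst nn_integral_multc) (auto simp: mult_ac)
  also have "\<dots> = ?I"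
    by (simp add: emeasure_lborel_box_eq inner_diff_left)
  also have "\<dots> \<le> ennreal (1 / (a * (m + 1)))" by (rule mark_int1[OF a])
  finally show ?thesis .
qed



lemma sets_marked[measurable_cong]: "sets (marked_unif :: ((real^'d) \<times> real) measure) = sets borel"
  by (simp add: marked_unif_def)

lemma space_marked[simp]: "space (marked_unif :: ((real^'d) \<times> real) measure) = UNIV"
  by (simp add: marked_unif_def)

lemma fst_nth_meas[measurable]: "(\<lambda>x::((real^'d) \<times> real). fst x $ i) \<in> borel_measurable marked_unif"
  by (subst measurable_cong_sets[OF sets_marked refl]) (intro borel_measurable_continuous_onI continuous_intros)

lemma snd_meas[measurable]: "(\<lambda>x::((real^'d) \<times> real). snd x) \<in> borel_measurable marked_unif"
  by (subst measurable_cong_sets[OF sets_marked refl]) (intro borel_measurable_continuous_onI continuous_intros)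

lemma hit_pred[measurable]:
  assumes "i \<in> I" "j \<in> I"
  shows "Measurable.pred (PiM I (\<lambda>_. marked_unif :: ((real^'d) \<times> real) measure)) (\<lambda>U. hit s (U i) (U j))"
proof -
  note assms[measurable]
  show ?thesis unfolding hit_def by measurable
qed



abbreviation "MU \<equiv> (marked_unif :: ((real^'d) \<times> real) measure)"

lemma prod_if01:
  "finite J \<Longrightarrow> (\<Prod>j\<in>J. indicator {z. P z} (y j) :: ennreal) = (if \<forall>j\<in>J. P (y j) then 1 else 0)"
  by (induction J rule: finite_induct) (auto simp: indicator_def)

lemma compl_hit:
  assumes x: "x \<in> box 0 One \<times> {0..1}" and s: "0 < s" "s \<le> 1"
  shows "emeasure (marked_unif :: ((real^'d) \<times> real) measure) {z. \<not> hit s x z} = ennreal (1 - s ^ CARD('d) * snd x)"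
proof -
  interpret prob_space "marked_unif :: ((real^'d) \<times> real) measure" by (rule prob_marked)
  have m: "{z. hit s x z} \<in> sets (marked_unif :: ((real^'d) \<times> real) measure)"
    using hit_meas by (simp add: sets_marked)
  have "{z. \<not> hit s x z} = space (marked_unif :: ((real^'d) \<times> real) measure) - {z. hit s x z}" by auto
  then have "emeasure (marked_unif :: ((real^'d) \<times> real) measure) {z. \<not> hit s x z} = 1 - ennreal (s ^ CARD('d) * snd x)"
    using emeasure_compl[OF m] hit_emeasure[OF x s] emeasure_space_1 by simp
  also have "\<dots> = ennreal (1 - s ^ CARD('d) * snd x)"
  proof -
    have "0 \<le> s ^ CARD('d) * snd x" using x s by auto
    then show ?thesis by (metis ennreal_1 ennreal_minus)
  qed
  finally show ?thesis .
qed

lemma event_prob: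
  fixes s :: real and n :: nat
  assumes s: "0 < s" "s \<le> 1" and n: "1 \<le> n"
  shows "emeasure (PiM {..<n} (\<lambda>_. marked_unif :: ((real^'d) \<times> real) measure))
           {U \<in> space (PiM {..<n} (\<lambda>_. marked_unif :: ((real^'d) \<times> real) measure)).
              U 0 \<in> box 0 One \<times> {0..1} \<longrightarrow> (\<forall>j\<in>{1..<n}. \<not> hit s (U 0) (U j))}
         \<le> ennreal (1 / (s ^ CARD('d) * n))"
proof -
  let ?M = "marked_unif :: ((real^'d) \<times> real) measure"
  let ?B = "box 0 One \<times> {0..1} :: ((real^'d) \<times> real) set"
  define J where "J = {1..<n}"
  have N: "{..<n} = insert 0 J" using n unfolding J_def by auto
  have J0: "0 \<notin> J" "finite J" unfolding J_def by auto
  have cJ: "card J = n - 1" unfolding J_def by simp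
  interpret Mp: prob_space ?M by (rule prob_marked)
  interpret PS: product_sigma_finite "\<lambda>_::nat. ?M"
    unfolding product_sigma_finite_def by (auto intro: Mp.sigma_finite_measure_axioms)
  interpret PJ: prob_space "PiM J (\<lambda>_. ?M)" by (rule prob_space_PiM) (rule prob_marked)
  define E where "E = {U \<in> space (PiM (insert 0 J) (\<lambda>_. ?M)). U 0 \<in> ?B \<longrightarrow> (\<forall>j\<in>J. \<not> hit s (U 0) (U j))}"
  have Em: "E \<in> sets (PiM (insert 0 J) (\<lambda>_. ?M))"
  proof -
    have [measurable]: "?B \<in> sets ?M" using B_sets by (simp add: sets_marked)
    note J0[measurable]
    show ?thesis unfolding E_def by measurable
  qed
  define h where "h x = (if x \<in> ?B then ennreal ((1 - s ^ CARD('d) * snd x) ^ (n - 1)) else 1)" for x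
  have inner: "(\<integral>\<^sup>+y. indicator E (y(0 := x)) \<partial>PiM J (\<lambda>_. ?M)) = h x" for x
  proof -
    have eq: "(indicator E (y(0 := x)) :: ennreal) = (if x \<in> ?B then (\<Prod>j\<in>J. indicator {z. \<not> hit s x z} (y j)) else 1)"
      if y: "y \<in> space (PiM J (\<lambda>_. ?M))" for y
    proof -
      note pj = prod_if01[OF J0(2), of "\<lambda>z. \<not> hit s x z" y]
      have sp: "y(0 := x) \<in> space (PiM (insert 0 J) (\<lambda>_. ?M))"
        using y by (auto simp: space_PiM PiE_def extensional_def)
      have yj: "(y(0 := x)) j = y j" if "j \<in> J" for j using that J0 by auto
      show ?thesis
        unfolding pj using sp yj J0 by (auto simp: E_def indicator_def)
    qed
    show ?thesis
    proof (cases "x \<in> ?B")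
      case False
      then have "(\<integral>\<^sup>+y. indicator E (y(0 := x)) \<partial>PiM J (\<lambda>_. ?M)) = (\<integral>\<^sup>+y. 1 \<partial>PiM J (\<lambda>_. ?M))"
        using eq by (intro nn_integral_cong) auto
      then show ?thesis using False by (simp add: h_def PJ.emeasure_space_1)
    next
      case True
      then have "(\<integral>\<^sup>+y. indicator E (y(0 := x)) \<partial>PiM J (\<lambda>_. ?M))
          = (\<integral>\<^sup>+y. (\<Prod>j\<in>J. indicator {z. \<not> hit s x z} (y j)) \<partial>PiM J (\<lambda>_. ?M))"
        using eq by (intro nn_integral_cong) auto
      also have "\<dots> = (\<Prod>j\<in>J. emeasure ?M {z. \<not> hit s x z})"
      proof -
        have [measurable]: "{z. \<not> hit s x z} \<in> sets ?M" using hit_meas[of s x] sets.compl_sets[of "{z. hit s x z}" ?M] by (simp add: sets_marked Compl_eq[symmetric] Collect_neg_eq)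
        show ?thesis
          by (subst PS.product_nn_integral_prod) (auto simp: J0)
      qed
      also have "\<dots> = ennreal (1 - s ^ CARD('d) * snd x) ^ card J"
        using compl_hit[OF True s] by simp
      moreover have "0 \<le> 1 - s ^ CARD('d) * snd x"
      proof -
        have "s ^ CARD('d) \<le> 1" using s by (simp add: power_le_one)
        moreover have "0 \<le> snd x" "snd x \<le> 1" using True by auto
        ultimately have "s ^ CARD('d) * snd x \<le> 1 * 1" by (intro mult_mono) auto
        then show ?thesis by simp
      qed
      ultimately show ?thesis using True cJ by (simp add: h_def ennreal_power)
    qed
  qed
  have "emeasure (PiM (insert 0 J) (\<lambda>_. ?M)) E = (\<integral>\<^sup>+U. indicator E U \<partial>PiM (insert 0 J) (\<lambda>_. ?M))"
    using Em by simp
  also have "\<dots> = (\<integral>\<^sup>+x. \<integral>\<^sup>+y. indicator E (y(0 := x)) \<partial>PiM J (\<lambda>_. ?M) \<partial>?M)"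
    using Em J0 by (intro PS.product_nn_integral_insert_rev) auto
  also have "\<dots> = (\<integral>\<^sup>+x. h x \<partial>?M)"
    by (simp add: inner)
  also have "\<dots> = (\<integral>\<^sup>+x. h x * indicator ?B x \<partial>lborel) / emeasure lborel ?B"
  proof -
    have [measurable]: "?B \<in> sets borel" by (rule B_sets)
    have [measurable]: "(\<lambda>x::((real^'d) \<times> real). snd x) \<in> borel_measurable borel"
      by (intro borel_measurable_continuous_onI continuous_intros)
    have [measurable]: "h \<in> borel_measurable borel" unfolding h_def by measurable
    show ?thesis unfolding marked_unif_def
      by (rule nn_integral_uniform_measure) auto
  qed
  also have "\<dots> = (\<integral>\<^sup>+x. ennreal ((1 - s ^ CARD('d) * snd x) ^ (n - 1)) * indicator ?B x \<partial>lborel)"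
    by (simp add: B_measure divide_ennreal_def) (intro nn_integral_cong, simp add: h_def indicator_def)
  also have "\<dots> \<le> ennreal (1 / (s ^ CARD('d) * real (n - 1 + 1)))"
    by (rule mark_int) (use s in \<open>auto simp: power_le_one\<close>)
  also have "n - 1 + 1 = n" using n by simp
  finally show ?thesis unfolding N E_def J_def .
qed



lemma card_pos_d: "0 < real CARD('d::finite)" by simp

lemma dist_l1: "dist (u::real^'d) v \<le> (\<Sum>i\<in>UNIV. \<bar>u$i - v$i\<bar>)"
  using norm_le_l1_cart[of "u - v"] by (simp add: dist_norm)

lemma dist_box_lt:
  assumes "u \<in> box 0 (One::real^'d)" "v \<in> box 0 (One::real^'d)"
  shows "dist u v < real CARD('d)"
proof -
  have "(\<Sum>i\<in>UNIV. \<bar>u$i - v$i\<bar>) < (\<Sum>i\<in>(UNIV::'d set). 1)"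
  proof (rule sum_strict_mono)
    fix i :: 'd
    have "0 < u$i" "u$i < 1" "0 < v$i" "v$i < 1" using assms by (auto simp: mem_box_cart)
    then show "\<bar>u$i - v$i\<bar> < 1" by linarith
  qed auto
  then show ?thesis using dist_l1[of u v] by simp
qed

lemma hit_dist:
  fixes x y :: "(real^'d) \<times> real"
  assumes x: "x \<in> box 0 One \<times> {0..1}" and h: "hit s x y"
  shows "dist (fst x) (fst y) < real CARD('d) * s"
proof -
  have "(\<Sum>i\<in>UNIV. \<bar>fst x$i - fst y$i\<bar>) < (\<Sum>i\<in>(UNIV::'d set). s)"
  proof (rule sum_strict_mono)
    fix i :: 'd
    have "fst x $ i < 1" using x by (auto simp: mem_box_cart)
    moreover have "min (fst x $ i) (1-s) < fst y $ i" "fst y $ i < min (fst x $ i) (1-s) + s"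
      using h by (auto simp: hit_def)
    ultimately show "\<bar>fst x$i - fst y$i\<bar> < s" by (auto simp: min_def split: if_splits)
  qed auto
  then show ?thesis using dist_l1[of "fst x" "fst y"] by simp
qed

lemma dist_scale: "c \<ge> 0 \<Longrightarrow> dist (c *\<^sub>R a) (c *\<^sub>R b) = c * dist a (b::'a::real_normed_vector)"
  by (simp add: dist_norm scaleR_diff_right[symmetric])

lemma pointwise:
  fixes U :: "nat \<Rightarrow> (real^'d) \<times> real" and c \<alpha> p :: real
  assumes U: "\<And>i. i < n \<Longrightarrow> U i \<in> box 0 One \<times> {0..1}" and c: "c > 0" and n: "1 \<le> n"
    and \<alpha>: "0 \<le> \<alpha>" and p: "0 < p"
  shows "ong_xi \<alpha> (scale_marked c (U 0)) (scale_marked c ` U ` {..<n}) powr p \<le> 1 \<or>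
         (\<exists>k::nat. 2 ^ k < c * CARD('d) \<and>
            ong_xi \<alpha> (scale_marked c (U 0)) (scale_marked c ` U ` {..<n}) powr p \<le> 2 powr (real (k+1) * (\<alpha> * p)) \<and>
            (\<forall>j\<in>{1..<n}. \<not> hit (2 ^ k / (c * CARD('d))) (U 0) (U j)))"
proof -
  define x0 where "x0 = scale_marked c (U 0)"
  define X where "X = scale_marked c ` U ` {..<n}"
  define S where "S = {y \<in> X - {x0}. snd y < snd x0}"
  define dd where "dd = real CARD('d)"
  have dd: "0 < dd" unfolding dd_def by simp
  have Smem: "\<exists>j<n. y = scale_marked c (U j) \<and> snd (U j) < snd (U 0)" if "y \<in> S" for y
    using that unfolding S_def X_def x0_def scale_marked_def by auto
  have Sin: "scale_marked c (U j) \<in> S" if "j < n" "snd (U j) < snd (U 0)" for j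
    using that unfolding S_def X_def x0_def scale_marked_def by auto
  have finS: "finite S" unfolding S_def X_def by auto
  have dsc: "dist (fst x0) (fst (scale_marked c (U j))) = c * dist (fst (U 0)) (fst (U j))" for j
    unfolding x0_def scale_marked_def using c by (simp add: dist_scale)
  show ?thesis
  proof (cases "S = {}")
    case True
    then have "ong_xi \<alpha> x0 X = 0" unfolding ong_xi_def Let_def S_def by simp
    then show ?thesis unfolding x0_def X_def by simp
  next
    case False
    define Y where "Y = (INF y\<in>S. dist (fst x0) (fst y))"
    have ong: "ong_xi \<alpha> x0 X = Y powr \<alpha>" unfolding ong_xi_def Let_def S_def[symmetric] Y_def using False by simp
    have YMin: "Y = Min ((\<lambda>y. dist (fst x0) (fst y)) ` S)" unfolding Y_def
      using finS False by (simp add: cInf_eq_Min)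
    have Ylow: "Y \<le> dist (fst x0) (fst y)" if "y \<in> S" for y
      unfolding YMin using finS that by (intro Min_le) auto
    have "Y \<in> (\<lambda>y. dist (fst x0) (fst y)) ` S"
      unfolding YMin using finS False by (intro Min_in) auto
    then obtain ys where ys: "ys \<in> S" "Y = dist (fst x0) (fst ys)" by auto
    obtain js where js: "js < n" "ys = scale_marked c (U js)" using Smem[OF ys(1)] by auto
    have Y0: "0 \<le> Y" using ys by simp
    have Ylt: "Y < c * dd"
    proof -
      have "U 0 \<in> box 0 One \<times> {0..1}" "U js \<in> box 0 One \<times> {0..1}" using U n js by auto
      then have "dist (fst (U 0)) (fst (U js)) < dd" unfolding dd_def by (intro dist_box_lt) auto
      then show ?thesis using ys js dsc c by simp
    qed
    have val: "ong_xi \<alpha> x0 X powr p = Y powr (\<alpha> * p)" unfolding ong by (simp add: powr_powr)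
    show ?thesis
    proof (cases "Y \<le> 1")
      case True
      have "Y powr (\<alpha> * p) \<le> 1" using True Y0 \<alpha> p by (intro powr_le1) auto
      then show ?thesis unfolding x0_def[symmetric] X_def[symmetric] val by simp
    next
      case False
      have ex: "\<exists>m. Y \<le> 2 ^ m" using real_arch_pow[of 2 Y] by (auto intro: less_imp_le)
      define m where "m = (LEAST m. Y \<le> (2::real) ^ m)"
      have m1: "Y \<le> 2 ^ m" unfolding m_def by (rule LeastI_ex[OF ex])
      have m0: "m \<noteq> 0" using m1 False by (metis power_0)
      define k where "k = m - 1"
      have km: "m = k + 1" using m0 unfolding k_def by simp
      have k1: "Y \<le> 2 ^ (k + 1)" using m1 km by simp
      have k2: "2 ^ k < Y"
      proof (rule ccontr)
        assume "\<not> 2 ^ k < Y"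
        then have "Y \<le> 2 ^ k" by simp
        then have "m \<le> k" unfolding m_def by (rule Least_le)
        then show False using km by simp
      qed
      have bound: "Y powr (\<alpha> * p) \<le> 2 powr (real (k+1) * (\<alpha> * p))"
      proof -
        have "Y powr (\<alpha> * p) \<le> (2 ^ (k+1)) powr (\<alpha> * p)"
          using k1 Y0 \<alpha> p by (intro powr_mono2) auto
        also have "(2::real) ^ (k+1) = 2 powr (real (k+1))" by (rule powr_realpow[symmetric]) simp
        finally show ?thesis by (simp add: powr_powr)
      qed
      have nohit: "\<not> hit (2 ^ k / (c * dd)) (U 0) (U j)" if j: "j \<in> {1..<n}" for j
      proof
        assume h: "hit (2 ^ k / (c * dd)) (U 0) (U j)"
        have "snd (U j) < snd (U 0)" using h by (simp add: hit_def)
        then have "scale_marked c (U j) \<in> S" using j by (intro Sin) auto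
        then have "Y \<le> c * dist (fst (U 0)) (fst (U j))" using Ylow dsc by metis
        also have "dist (fst (U 0)) (fst (U j)) < dd * (2 ^ k / (c * dd))"
          using U n h hit_dist[of "U 0" "2 ^ k / (c * dd)" "U j"] unfolding dd_def by auto
        then have "c * dist (fst (U 0)) (fst (U j)) < c * (dd * (2 ^ k / (c * dd)))"
          using c by simp
        also have "c * (dd * (2 ^ k / (c * dd))) = 2 ^ k" using c dd by simp
        finally show False using k2 by simp
      qed
      have "2 ^ k < c * dd" using k2 Ylt by simp
      then show ?thesis unfolding x0_def[symmetric] X_def[symmetric]
        apply (intro disjI2 exI[of _ k])
        using bound nohit val unfolding dd_def by auto
    qed
  qed
qed



lemma ennreal_term_le_suminf: "(f::nat\<Rightarrow>ennreal) k \<le> suminf f"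
  using sum_le_suminf[of f "{k}"] by (simp add: summableI)

lemma per_n_bound:
  fixes \<alpha> p :: real and n :: nat
  assumes \<alpha>: "0 \<le> \<alpha>" and p: "p > 1" and n: "1 \<le> n"
  defines "q \<equiv> \<alpha> * p"
  defines "bnd \<equiv> (\<lambda>k::nat. 2 powr (real (k+1) * q) * (real CARD('d) ^ CARD('d) / (2 ^ k) ^ CARD('d)))"
  shows "(\<integral>\<^sup>+ U. ennreal ((ong_xi \<alpha> (scale_marked (real n powr (1 / real CARD('d))) (U 0))
                         (scale_marked (real n powr (1 / real CARD('d))) ` U ` {..<n})) powr p)
            \<partial>(PiM {..<n} (\<lambda>_. (marked_unif :: ((real^'d) \<times> real) measure)))) \<le> 1 + (\<Sum>k. ennreal (bnd k))"
proof -
  let ?M = "marked_unif :: ((real^'d) \<times> real) measure"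
  let ?P = "PiM {..<n} (\<lambda>_. ?M)"
  let ?B = "box 0 One \<times> {0..1} :: ((real^'d) \<times> real) set"
  define dd where "dd = real CARD('d)"
  have dd: "0 < dd" unfolding dd_def by simp
  define c where "c = real n powr (1 / real CARD('d))"
  have c: "0 < c" unfolding c_def using n by simp
  have cd: "c ^ CARD('d) = real n" unfolding c_def using n by (simp add: powr_inverse_root)
  define f where "f U = ong_xi \<alpha> (scale_marked c (U 0)) (scale_marked c ` U ` {..<n}) powr p" for U :: "nat \<Rightarrow> (real^'d) \<times> real"
  define w where "w k = 2 powr (real (k+1) * q)" for k :: nat
  define G where "G k = (if 2 ^ k < c * dd then {U \<in> space ?P. U 0 \<in> ?B \<longrightarrow> (\<forall>j\<in>{1..<n}. \<not> hit (2 ^ k / (c * dd)) (U 0) (U j))} else {})" for k :: nat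
  interpret Mp: prob_space ?M by (rule prob_marked)
  interpret PP: prob_space ?P by (rule prob_space_PiM) (rule prob_marked)
  have Gm[measurable]: "G k \<in> sets ?P" for k
  proof -
    have [measurable]: "?B \<in> sets ?M" using B_sets by (simp add: sets_marked)
    have [measurable]: "(0::nat) \<in> {..<n}" using n by simp
    have [measurable]: "j \<in> {1..<n} \<Longrightarrow> j \<in> {..<n}" for j by simp
    show ?thesis unfolding G_def by (cases "2 ^ k < c * dd") (simp, measurable, simp)
  qed
  have AEB: "AE U in ?P. \<forall>i\<in>{..<n}. U i \<in> ?B"
  proof (subst AE_finite_all)
    show "finite {..<n}" by simp
    show "\<forall>i\<in>{..<n}. AE U in ?P. U i \<in> ?B"
    proof
      fix i assume i: "i \<in> {..<n}"
      have "AE x in ?M. x \<in> ?B"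
        unfolding marked_unif_def by (rule AE_uniform_measureI) (auto simp: B_sets)
      then show "AE U in ?P. U i \<in> ?B"
        by (rule AE_PiM_component[OF prob_marked i])
    qed
  qed
  have pw: "ennreal (f U) \<le> 1 + (\<Sum>k. ennreal (w k) * indicator (G k) U)"
    if U: "U \<in> space ?P" "\<forall>i\<in>{..<n}. U i \<in> ?B" for U
  proof -
    have "f U \<le> 1 \<or> (\<exists>k::nat. 2 ^ k < c * CARD('d) \<and> f U \<le> 2 powr (real (k+1) * (\<alpha> * p)) \<and>
            (\<forall>j\<in>{1..<n}. \<not> hit (2 ^ k / (c * CARD('d))) (U 0) (U j)))"
      unfolding f_def using U p \<alpha> n c by (intro pointwise) auto
    then show ?thesis
    proof
      assume "f U \<le> 1"
      then have "ennreal (f U) \<le> 1" by (simp add: ennreal_le_1)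
      then show ?thesis by (simp add: add_increasing2)
    next
      assume "\<exists>k::nat. 2 ^ k < c * CARD('d) \<and> f U \<le> 2 powr (real (k+1) * (\<alpha> * p)) \<and>
            (\<forall>j\<in>{1..<n}. \<not> hit (2 ^ k / (c * CARD('d))) (U 0) (U j))"
      then obtain k :: nat where k: "2 ^ k < c * dd" "f U \<le> w k"
          "\<forall>j\<in>{1..<n}. \<not> hit (2 ^ k / (c * dd)) (U 0) (U j)"
        unfolding w_def q_def dd_def by auto
      have "U \<in> G k" unfolding G_def using k U by auto
      then have "ennreal (f U) \<le> ennreal (w k) * indicator (G k) U" using k by (simp add: ennreal_leI)
      also have "\<dots> \<le> (\<Sum>k. ennreal (w k) * indicator (G k) U)" by (rule ennreal_term_le_suminf)
      also have "\<dots> \<le> 1 + (\<Sum>k. ennreal (w k) * indicator (G k) U)" by simp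
      finally show ?thesis .
    qed
  qed
  have "(\<integral>\<^sup>+U. ennreal (f U) \<partial>?P) \<le> (\<integral>\<^sup>+U. 1 + (\<Sum>k. ennreal (w k) * indicator (G k) U) \<partial>?P)"
    using AEB by (intro nn_integral_mono_AE) (auto intro: pw)
  also have "\<dots> = (\<integral>\<^sup>+U. 1 \<partial>?P) + (\<integral>\<^sup>+U. (\<Sum>k. ennreal (w k) * indicator (G k) U) \<partial>?P)"
    by (rule nn_integral_add) measurable
  also have "(\<integral>\<^sup>+U. (\<Sum>k. ennreal (w k) * indicator (G k) U) \<partial>?P) = (\<Sum>k. \<integral>\<^sup>+U. ennreal (w k) * indicator (G k) U \<partial>?P)"
    by (rule nn_integral_suminf) measurable
  also have "\<dots> = (\<Sum>k. ennreal (w k) * emeasure ?P (G k))"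
    by (simp add: nn_integral_cmult_indicator)
  also have "\<dots> \<le> (\<Sum>k. ennreal (bnd k))"
  proof (rule suminf_le)
    fix k
    show "ennreal (w k) * emeasure ?P (G k) \<le> ennreal (bnd k)"
    proof (cases "2 ^ k < c * dd")
      case True
      define s where "s = 2 ^ k / (c * dd)"
      have s: "0 < s" "s \<le> 1" unfolding s_def using True c dd by auto
      have "emeasure ?P (G k) \<le> ennreal (1 / (s ^ CARD('d) * n))"
        unfolding G_def s_def[symmetric] using True event_prob[OF s n] by simp
      also have "1 / (s ^ CARD('d) * n) = real CARD('d) ^ CARD('d) / (2 ^ k) ^ CARD('d)"
        unfolding s_def using c dd cd n by (simp add: power_divide power_mult_distrib dd_def field_simps)
      finally have "ennreal (w k) * emeasure ?P (G k) \<le> ennreal (w k) * ennreal (real CARD('d) ^ CARD('d) / (2 ^ k) ^ CARD('d))"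
        by (rule mult_left_mono) simp
      also have "\<dots> = ennreal (bnd k)" unfolding bnd_def w_def by (subst ennreal_mult[symmetric]) auto
      finally show ?thesis .
    next
      case False
      then show ?thesis unfolding G_def by simp
    qed
  qed (auto intro: summableI)
  finally show ?thesis using PP.emeasure_space_1 unfolding f_def c_def by (simp add: add_left_mono)
qed



lemma bnd_summable:
  fixes q :: real
  assumes q: "q < real CARD('d::finite)"
  shows "summable (\<lambda>k::nat. 2 powr (real (k+1) * q) * (real CARD('d) ^ CARD('d) / (2 ^ k) ^ CARD('d)))"
proof -
  define r where "r = 2 powr q / 2 ^ CARD('d)"
  have r0: "0 \<le> r" unfolding r_def by simp
  have "2 powr q < 2 powr real CARD('d)" using q by (intro powr_less_mono) auto
  then have r1: "r < 1" unfolding r_def by (simp add: powr_realpow)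
  have eq: "2 powr (real (k+1) * q) * (real CARD('d) ^ CARD('d) / (2 ^ k) ^ CARD('d))
      = (2 powr q * real CARD('d) ^ CARD('d)) * r ^ k" for k :: nat
  proof -
    have a: "2 powr (real (k+1) * q) = 2 powr q * (2 powr q) ^ k"
      by (simp add: powr_add powr_powr[symmetric] powr_realpow algebra_simps)
    have b: "((2::real) ^ k) ^ CARD('d) = (2 ^ CARD('d)) ^ k"
      by (simp add: power_mult[symmetric] mult.commute)
    show ?thesis unfolding a b r_def by (simp add: power_divide)
  qed
  show ?thesis unfolding eq
    by (intro summable_mult summable_geometric) (use r0 r1 in auto)
qed



theorem lemma2:
  fixes \<alpha> p :: real
  assumes "0 \<le> \<alpha>" and "\<alpha> < real CARD('d::finite)" and "p > 1" and "\<alpha> * p < real CARD('d)"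
  shows "(SUP n\<in>{1::nat..}.
            \<integral>\<^sup>+ U. ennreal ((ong_xi \<alpha> (scale_marked (real n powr (1 / real CARD('d))) (U 0))
                         (scale_marked (real n powr (1 / real CARD('d))) ` U ` {..<n})) powr p)
            \<partial>(PiM {..<n} (\<lambda>_. (marked_unif :: ((real^'d) \<times> real) measure)))) < \<infinity>"
proof -
  define bnd where "bnd = (\<lambda>k::nat. 2 powr (real (k+1) * (\<alpha> * p)) * (real CARD('d) ^ CARD('d) / (2 ^ k) ^ CARD('d)))"
  have "(SUP n\<in>{1::nat..}.
            \<integral>\<^sup>+ U. ennreal ((ong_xi \<alpha> (scale_marked (real n powr (1 / real CARD('d))) (U 0))
                         (scale_marked (real n powr (1 / real CARD('d))) ` U ` {..<n})) powr p)
            \<partial>(PiM {..<n} (\<lambda>_. (marked_unif :: ((real^'d) \<times> real) measure)))) \<le> 1 + (\<Sum>k. ennreal (bnd k))"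
  proof (rule SUP_least)
    fix n :: nat assume "n \<in> {1..}"
    then have n: "1 \<le> n" by simp
    show "(\<integral>\<^sup>+ U. ennreal ((ong_xi \<alpha> (scale_marked (real n powr (1 / real CARD('d))) (U 0))
                         (scale_marked (real n powr (1 / real CARD('d))) ` U ` {..<n})) powr p)
            \<partial>(PiM {..<n} (\<lambda>_. (marked_unif :: ((real^'d) \<times> real) measure)))) \<le> 1 + (\<Sum>k. ennreal (bnd k))"
      unfolding bnd_def by (rule per_n_bound[OF assms(1) assms(3) n])
  qed
  also have "(\<Sum>k. ennreal (bnd k)) = ennreal (\<Sum>k. bnd k)"
    using bnd_summable[OF assms(4)] unfolding bnd_def by (intro suminf_ennreal2) auto
  also have "1 + ennreal (\<Sum>k. bnd k) < \<infinity>" by (simp add: ennreal_1[symmetric] del: ennreal_1)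
  finally show ?thesis .
qed


end
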